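(* Let $X$ be a non-separable, non-reflexive real Banach space. If $X$ contains an overcomplete subset, then $X$ contains a bounded overcomplete subset which is not relatively weakly compact.
   Context: A subset $S$ of a Banach space $X$ with $|S| = \operatorname{dens} X$ (density character) is called overcomplete if every subset $\Lambda \subseteq S$ with $|\Lambda| = |S|$ is linearly dense in $X$. *)

theory Defs
  imports "HOL-Analysis.Analysis"
begin

definition dense_set :: "'a::real_normed_vector set \<Rightarrow> bool" where
  "dense_set D \<longleftrightarrow> closure D = UNIV"

definition card_eq_density :: "'a::real_normed_vector set \<Rightarrow> bool" where
  "card_eq_density (S::'a set) \<longleftrightarrow>
     (\<exists>D::'a set. dense_set D \<and> (card_of S, card_of D) \<in> ordIso) \<and>
     (\<forall>D::'a set. dense_set D \<longrightarrow> (card_of S, card_of D) \<in> ordLeq)"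

definition linearly_dense :: "'a::real_normed_vector set \<Rightarrow> bool" where
  "linearly_dense A \<longleftrightarrow> closure (span A) = UNIV"

definition overcomplete :: "'a::real_normed_vector set \<Rightarrow> bool" where
  "overcomplete S \<longleftrightarrow> card_eq_density S \<and>
     (\<forall>L. L \<subseteq> S \<and> (card_of L, card_of S) \<in> ordIso \<longrightarrow> linearly_dense L)"

definition weak_topology :: "'a::real_normed_vector topology" where
  "weak_topology = topology_generated_by
     {f -` U | (f :: 'a \<Rightarrow> real) U. bounded_linear f \<and> open U}"

definition relatively_weakly_compact :: "'a::real_normed_vector set \<Rightarrow> bool" where
  "relatively_weakly_compact S \<longleftrightarrow> compactin weak_topology (weak_topology closure_of S)"

definition reflexive_space :: "'a::real_normed_vector itself \<Rightarrow> bool" where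
  "reflexive_space _ \<longleftrightarrow>
     (\<forall>\<phi> :: ('a \<Rightarrow>\<^sub>L real) \<Rightarrow>\<^sub>L real. \<exists>x::'a. \<forall>f. blinfun_apply \<phi> f = blinfun_apply f x)"

end

theory Submission
  imports Defs
begin


definition hb_good :: "('b::real_vector \<Rightarrow> real) \<Rightarrow> 'b set \<Rightarrow> ('b \<Rightarrow> real) \<Rightarrow> ('b \<times> real) set \<Rightarrow> bool" where
  "hb_good p W l G \<longleftrightarrow>
     (\<forall>a s b t. (a,s)\<in>G \<longrightarrow> (b,t)\<in>G \<longrightarrow> (a+b, s+t) \<in> G) \<and>
     (\<forall>a s c. (a,s) \<in> G \<longrightarrow> (c *\<^sub>R a, c * s) \<in> G) \<and>
     (\<forall>a s t. (a,s)\<in>G \<longrightarrow> (a,t)\<in>G \<longrightarrow> s = t) \<and>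
     (\<forall>a s. (a,s)\<in>G \<longrightarrow> s \<le> p a) \<and> (\<forall>a\<in>W. (a, l a) \<in> G)"

lemma hb_goodI:
  assumes "\<And>a s b t. (a,s)\<in>G \<Longrightarrow> (b,t)\<in>G \<Longrightarrow> (a+b, s+t) \<in> G"
    "\<And>a s c. (a,s) \<in> G \<Longrightarrow> (c *\<^sub>R a, c * s) \<in> G"
    "\<And>a s t. (a,s)\<in>G \<Longrightarrow> (a,t)\<in>G \<Longrightarrow> s = t"
    "\<And>a s. (a,s)\<in>G \<Longrightarrow> s \<le> p a" "\<And>a. a\<in>W \<Longrightarrow> (a, l a) \<in> G"
  shows "hb_good p W l G"
  unfolding hb_good_def using assms by blast

lemma hb_goodD:
  assumes "hb_good p W l G"
  shows "\<And>a s b t. (a,s)\<in>G \<Longrightarrow> (b,t)\<in>G \<Longrightarrow> (a+b, s+t) \<in> G"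
    "\<And>a s c. (a,s) \<in> G \<Longrightarrow> (c *\<^sub>R a, c * s) \<in> G"
    "\<And>a s t. (a,s)\<in>G \<Longrightarrow> (a,t)\<in>G \<Longrightarrow> s = t"
    "\<And>a s. (a,s)\<in>G \<Longrightarrow> s \<le> p a" "\<And>a. a\<in>W \<Longrightarrow> (a, l a) \<in> G"
  using assms unfolding hb_good_def by blast+

lemma HB_ext:
  fixes p :: "'b::real_vector \<Rightarrow> real" and W :: "'b set" and l :: "'b \<Rightarrow> real"
  assumes psub: "\<And>a b. p (a + b) \<le> p a + p b"
    and phom: "\<And>c a. c > 0 \<Longrightarrow> p (c *\<^sub>R a) = c * p a"
    and W: "subspace W"
    and ladd: "\<And>a b. a \<in> W \<Longrightarrow> b \<in> W \<Longrightarrow> l (a + b) = l a + l b"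
    and lhom: "\<And>c a. a \<in> W \<Longrightarrow> l (c *\<^sub>R a) = c * l a"
    and lp: "\<And>a. a \<in> W \<Longrightarrow> l a \<le> p a"
  shows "\<exists>g. linear g \<and> (\<forall>a\<in>W. g a = l a) \<and> (\<forall>a. g a \<le> p a)"
proof -
  define A where "A = Collect (hb_good p W l)"
  define G0 where "G0 = {(a, l a) | a. a \<in> W}"
  have "hb_good p W l G0"
  proof (rule hb_goodI)
    fix a s b t assume "(a,s) \<in> G0" "(b,t) \<in> G0"
    thus "(a+b, s+t) \<in> G0" using W ladd unfolding G0_def by (auto simp: subspace_add)
  next
    fix a s c assume "(a,s) \<in> G0"
    thus "(c *\<^sub>R a, c * s) \<in> G0" using W lhom unfolding G0_def by (auto simp: subspace_scale)
  qed (use lp in \<open>auto simp: G0_def\<close>)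
  have "\<exists>M\<in>A. \<forall>X\<in>A. M \<subseteq> X \<longrightarrow> X = M"
  proof (rule Zorn_Lemma2, rule ballI)
    fix C assume C: "C \<in> chains A"
    hence CA: "C \<subseteq> A" and ch: "\<And>X Y. X \<in> C \<Longrightarrow> Y \<in> C \<Longrightarrow> X \<subseteq> Y \<or> Y \<subseteq> X"
      by (auto simp: chains_def chain_subset_def)
    show "\<exists>U\<in>A. \<forall>X\<in>C. X \<subseteq> U"
    proof (cases "C = {}")
      case True thus ?thesis using \<open>hb_good p W l G0\<close> A_def by auto
    next
      case False
      have gX: "hb_good p W l X" if "X \<in> C" for X using that CA A_def by auto
      have two: "\<exists>X\<in>C. x \<in> X \<and> y \<in> X" if xy: "x \<in> \<Union>C" "y \<in> \<Union>C" for x y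
      proof -
        obtain X Y where "X \<in> C" "Y \<in> C" "x \<in> X" "y \<in> Y" using xy by blast
        thus ?thesis using ch[of X Y] by blast
      qed
      have "hb_good p W l (\<Union>C)"
      proof (rule hb_goodI)
        fix a s b t assume "(a,s) \<in> \<Union>C" "(b,t) \<in> \<Union>C"
        then obtain X where "X \<in> C" "(a,s) \<in> X" "(b,t) \<in> X" using two by blast
        thus "(a+b, s+t) \<in> \<Union>C" using hb_goodD(1)[OF gX] by blast
      next
        fix a s c assume "(a,s) \<in> \<Union>C"
        then obtain X where "X \<in> C" "(a,s) \<in> X" by blast
        thus "(c *\<^sub>R a, c * s) \<in> \<Union>C" using hb_goodD(2)[OF gX] by blast
      next
        fix a s t assume "(a,s) \<in> \<Union>C" "(a,t) \<in> \<Union>C"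
        then obtain X where "X \<in> C" "(a,s) \<in> X" "(a,t) \<in> X" using two by blast
        thus "s = t" using hb_goodD(3)[OF gX] by blast
      next
        fix a s assume "(a,s) \<in> \<Union>C"
        then obtain X where "X \<in> C" "(a,s) \<in> X" by blast
        thus "s \<le> p a" using hb_goodD(4)[OF gX] by blast
      next
        fix a assume "a \<in> W"
        obtain X where "X \<in> C" using False by blast
        thus "(a, l a) \<in> \<Union>C" using hb_goodD(5)[OF gX] \<open>a \<in> W\<close> by blast
      qed
      thus ?thesis using A_def by auto
    qed
  qed
  then obtain M where MA: "M \<in> A" and Mmax: "\<And>X. X \<in> A \<Longrightarrow> M \<subseteq> X \<Longrightarrow> X = M" by blast
  have gM: "hb_good p W l M" using MA A_def by auto
  note Madd = hb_goodD(1)[OF gM] and Msc = hb_goodD(2)[OF gM] and Mfun = hb_goodD(3)[OF gM]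
    and Mp = hb_goodD(4)[OF gM] and MW = hb_goodD(5)[OF gM]
  have M0: "(0, 0) \<in> M"
    using Msc[OF MW[OF subspace_0[OF W]], of 0] by simp
  have total: "\<exists>s. (v,s) \<in> M" for v
  proof (rule ccontr)
    assume nv: "\<nexists>s. (v, s) \<in> M"
    define P where "P = {s - p (a - v) | a s. (a,s) \<in> M}"
    have bnd: "s - p (a - v) \<le> p (b + v) - u" if "(a,s) \<in> M" "(b,u) \<in> M" for a s b u
    proof -
      have "s + u \<le> p (a + b)" using Mp[OF Madd[OF that]] .
      also have "\<dots> = p ((a - v) + (b + v))" by (simp add: algebra_simps)
      also have "\<dots> \<le> p (a - v) + p (b + v)" by (rule psub)
      finally show ?thesis by simp
    qed
    have Pne: "P \<noteq> {}" using M0 unfolding P_def by blast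
    have Pbdd: "bdd_above P" unfolding bdd_above_def
    proof (intro exI ballI)
      fix x assume "x \<in> P"
      then obtain a s where "(a,s) \<in> M" "x = s - p (a - v)" unfolding P_def by blast
      thus "x \<le> p (0 + v) - 0" using bnd[OF _ M0] by simp
    qed
    define c where "c = Sup P"
    have c1: "s - p (a - v) \<le> c" if "(a,s) \<in> M" for a s
    proof -
      have "s - p (a - v) \<in> P" unfolding P_def using that by blast
      thus ?thesis unfolding c_def by (rule cSup_upper[OF _ Pbdd])
    qed
    have c2: "c \<le> p (b + v) - u" if "(b,u) \<in> M" for b u
      unfolding c_def
    proof (rule cSup_least[OF Pne])
      fix x assume "x \<in> P"
      then obtain a s where "(a,s) \<in> M" "x = s - p (a - v)" unfolding P_def by blast
      thus "x \<le> p (b + v) - u" using bnd[OF _ that] by simp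
    qed
    define M' where "M' = {(a + t *\<^sub>R v, s + t * c) | a s t. (a,s) \<in> M}"
    have M'E: "\<exists>a s t. (a,s) \<in> M \<and> x = a + t *\<^sub>R v \<and> y = s + t * c" if "(x,y) \<in> M'" for x y
      using that unfolding M'_def by blast
    have M'I: "(a + t *\<^sub>R v, s + t * c) \<in> M'" if "(a,s) \<in> M" for a s t
      using that unfolding M'_def by blast
    have "hb_good p W l M'"
    proof (rule hb_goodI)
      fix x y x' y' assume "(x,y) \<in> M'" "(x',y') \<in> M'"
      then obtain a s t a' s' t' where "(a,s) \<in> M" "(a',s') \<in> M"
        "x = a + t *\<^sub>R v" "y = s + t * c" "x' = a' + t' *\<^sub>R v" "y' = s' + t' * c"
        using M'E by metis
      moreover have "(a + a' + (t + t') *\<^sub>R v, s + s' + (t + t') * c) \<in> M'"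
        by (rule M'I, rule Madd) fact+
      ultimately show "(x + x', y + y') \<in> M'" by (simp add: algebra_simps)
    next
      fix x y k assume "(x,y) \<in> M'"
      then obtain a s t where "(a,s) \<in> M" "x = a + t *\<^sub>R v" "y = s + t * c"
        using M'E by metis
      moreover have "(k *\<^sub>R a + (k * t) *\<^sub>R v, k * s + (k * t) * c) \<in> M'"
        by (rule M'I, rule Msc) fact
      ultimately show "(k *\<^sub>R x, k * y) \<in> M'" by (simp add: algebra_simps)
    next
      fix x y y' assume "(x,y) \<in> M'" "(x,y') \<in> M'"
      then obtain a s t a' s' t' where as: "(a,s) \<in> M" "(a',s') \<in> M"
        and eq: "x = a + t *\<^sub>R v" "y = s + t * c" "x = a' + t' *\<^sub>R v" "y' = s' + t' * c"
        using M'E by metis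
      have "t = t'"
      proof (rule ccontr)
        assume "t \<noteq> t'"
        have d: "(a' + (-1) *\<^sub>R a, s' + (-1) * s) \<in> M" using Madd[OF as(2) Msc[OF as(1)]] .
        have "(inverse (t - t') *\<^sub>R (a' + (-1) *\<^sub>R a), inverse (t - t') * (s' + (-1) * s)) \<in> M"
          by (rule Msc[OF d])
        moreover have "inverse (t - t') *\<^sub>R (a' + (-1) *\<^sub>R a) = v"
        proof -
          have "a' - a = (t - t') *\<^sub>R v" using eq by (simp add: algebra_simps)
          thus ?thesis using \<open>t \<noteq> t'\<close> by simp
        qed
        ultimately show False using nv by auto
      qed
      hence "a = a'" using eq by simp
      hence "s = s'" using Mfun as by blast
      thus "y = y'" using eq \<open>t = t'\<close> by simp
    next
      fix x y assume "(x,y) \<in> M'"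
      then obtain a s t where as: "(a,s) \<in> M" and eq: "x = a + t *\<^sub>R v" "y = s + t * c"
        using M'E by metis
      show "y \<le> p x"
      proof (cases "t > 0")
        case True
        have "(inverse t *\<^sub>R a, inverse t * s) \<in> M" by (rule Msc[OF as])
        from c2[OF this] have "c \<le> p (inverse t *\<^sub>R a + v) - inverse t * s" .
        hence "t * c \<le> t * p (inverse t *\<^sub>R a + v) - s"
          using True by (simp add: field_simps)
        also have "t * p (inverse t *\<^sub>R a + v) = p (t *\<^sub>R (inverse t *\<^sub>R a + v))"
          using phom[OF True] by simp
        also have "t *\<^sub>R (inverse t *\<^sub>R a + v) = x" using True eq by (simp add: algebra_simps)
        finally show ?thesis using eq by simp
      next
        case False
        show ?thesis
        proof (cases "t = 0")
          case True thus ?thesis using eq Mp[OF as] by simp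
        next
          case False
          define u where "u = - t"
          have u: "u > 0" using False \<open>\<not> t > 0\<close> u_def by simp
          have "(inverse u *\<^sub>R a, inverse u * s) \<in> M" by (rule Msc[OF as])
          from c1[OF this] have "inverse u * s - p (inverse u *\<^sub>R a - v) \<le> c" .
          hence "s - u * p (inverse u *\<^sub>R a - v) \<le> u * c"
            using u by (simp add: field_simps)
          also have "u * p (inverse u *\<^sub>R a - v) = p (u *\<^sub>R (inverse u *\<^sub>R a - v))"
            using phom[OF u] by simp
          also have "u *\<^sub>R (inverse u *\<^sub>R a - v) = x" using u eq u_def by (simp add: algebra_simps)
          finally show ?thesis using eq u_def by simp
        qed
      qed
    next
      fix a assume "a \<in> W"
      show "(a, l a) \<in> M'" using M'I[OF MW[OF \<open>a \<in> W\<close>], of 0] by simp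
    qed
    moreover have "M \<subseteq> M'"
    proof
      fix x assume "x \<in> M"
      then obtain a s where "x = (a,s)" "(a,s) \<in> M" by (cases x) auto
      thus "x \<in> M'" using M'I[of a s 0] by simp
    qed
    ultimately have "M' = M" using Mmax A_def by auto
    moreover have "(v, c) \<in> M'" using M'I[OF M0, of 1] by simp
    ultimately show False using nv by auto
  qed
  define g where "g a = (THE s. (a,s) \<in> M)" for a
  have gM: "(a, g a) \<in> M" for a
    unfolding g_def using total[of a] Mfun by (metis theI)
  have geq: "g a = s" if "(a,s) \<in> M" for a s using gM that Mfun by blast
  have "linear g"
    by (rule linearI) (auto intro!: geq Madd Msc gM)
  moreover have "\<forall>a\<in>W. g a = l a" using geq MW by blast
  moreover have "\<forall>a. g a \<le> p a" using Mp gM by blast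
  ultimately show ?thesis by blast
qed



lemma infdist_geI: "A \<noteq> {} \<Longrightarrow> (\<And>a. a \<in> A \<Longrightarrow> c \<le> dist x a) \<Longrightarrow> c \<le> infdist x A"
  by (simp add: infdist_notempty cINF_greatest)

lemma infdist_transl:
  fixes Y :: "'b::real_normed_vector set"
  assumes Y: "subspace Y" and y: "y \<in> Y"
  shows "infdist (z - y) Y = infdist z Y"
proof -
  have ne: "Y \<noteq> {}" using subspace_0[OF Y] by blast
  have A: "infdist (z - y) Y \<le> infdist z Y" if "y \<in> Y" for z y
  proof (rule infdist_geI[OF ne])
    fix a assume a: "a \<in> Y"
    have "a - y \<in> Y" using subspace_diff[OF Y a that] .
    hence "infdist (z - y) Y \<le> dist (z - y) (a - y)" by (rule infdist_le)
    thus "infdist (z - y) Y \<le> dist z a" by (simp add: dist_norm algebra_simps)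
  qed
  have "infdist z Y = infdist ((z - y) - (- y)) Y" by simp
  also have "\<dots> \<le> infdist (z - y) Y" by (rule A) (use subspace_neg[OF Y y] in auto)
  finally show ?thesis using A[OF y, of z] by linarith
qed

lemma infdist_subadd:
  fixes Y :: "'b::real_normed_vector set"
  assumes Y: "subspace Y"
  shows "infdist (a + b) Y \<le> infdist a Y + infdist b Y"
proof -
  have ne: "Y \<noteq> {}" using subspace_0[OF Y] by blast
  have "infdist (a + b) Y - infdist b Y \<le> infdist a Y"
  proof (rule infdist_geI[OF ne])
    fix y assume y: "y \<in> Y"
    have "infdist (a + b) Y = infdist (a + b - y) Y" using infdist_transl[OF Y y] by simp
    also have "\<dots> \<le> infdist b Y + dist (a + b - y) b" by (rule infdist_triangle)
    also have "dist (a + b - y) b = dist a y" by (simp add: dist_norm algebra_simps)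
    finally show "infdist (a + b) Y - infdist b Y \<le> dist a y" by simp
  qed
  thus ?thesis by simp
qed

lemma infdist_hom:
  fixes Y :: "'b::real_normed_vector set"
  assumes Y: "subspace Y" and c: "c > 0"
  shows "infdist (c *\<^sub>R a) Y = c * infdist a Y"
proof -
  have ne: "Y \<noteq> {}" using subspace_0[OF Y] by blast
  have "infdist (c *\<^sub>R a) Y / c \<le> infdist a Y"
  proof (rule infdist_geI[OF ne])
    fix y assume y: "y \<in> Y"
    have "infdist (c *\<^sub>R a) Y \<le> dist (c *\<^sub>R a) (c *\<^sub>R y)"
      by (rule infdist_le) (rule subspace_scale[OF Y y])
    also have "\<dots> = c * dist a y" using c
      by (simp add: dist_norm scaleR_diff_right[symmetric])
    finally show "infdist (c *\<^sub>R a) Y / c \<le> dist a y" using c by (simp add: field_simps)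
  qed
  moreover have "c * infdist a Y \<le> infdist (c *\<^sub>R a) Y"
  proof (rule infdist_geI[OF ne])
    fix y assume y: "y \<in> Y"
    have "infdist a Y \<le> dist a (inverse c *\<^sub>R y)"
      by (rule infdist_le) (rule subspace_scale[OF Y y])
    hence "c * infdist a Y \<le> c * dist a (inverse c *\<^sub>R y)" using c by simp
    also have "c * dist a (inverse c *\<^sub>R y) = dist (c *\<^sub>R a) y"
    proof -
      have "c *\<^sub>R a - y = c *\<^sub>R (a - inverse c *\<^sub>R y)" using c by (simp add: algebra_simps)
      thus ?thesis using c by (simp add: dist_norm)
    qed
    finally show "c * infdist a Y \<le> dist (c *\<^sub>R a) y" .
  qed
  ultimately show ?thesis using c by (simp add: field_simps)
qed

lemma dist_functional:
  fixes Y :: "'b::real_normed_vector set"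
  assumes Y: "subspace Y" and d: "d > 0" and dx: "\<And>y. y \<in> Y \<Longrightarrow> d \<le> norm (x - y)"
  shows "\<exists>g. linear g \<and> (\<forall>z. \<bar>g z\<bar> \<le> norm z) \<and> (\<forall>y\<in>Y. g y = 0) \<and> d \<le> g x"
proof -
  have ne: "Y \<noteq> {}" using subspace_0[OF Y] by blast
  define D where "D = infdist x Y"
  have Dd: "d \<le> D" unfolding D_def
    by (rule infdist_geI[OF ne]) (simp add: dist_norm dx)
  have x0: "x \<noteq> 0" using dx[OF subspace_0[OF Y]] d by auto
  define l where "l z = (SOME t. z = t *\<^sub>R x) * D" for z
  have lt: "l (t *\<^sub>R x) = t * D" for t
  proof -
    have "(SOME s. t *\<^sub>R x = s *\<^sub>R x) = t"
      by (rule some_equality) (use x0 in auto)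
    thus ?thesis unfolding l_def by simp
  qed
  have W: "span {x} = range (\<lambda>t. t *\<^sub>R x)" by (rule span_singleton)
  have "\<exists>g. linear g \<and> (\<forall>a\<in>span {x}. g a = l a) \<and> (\<forall>a. g a \<le> infdist a Y)"
  proof (rule HB_ext)
    show "infdist (a + b) Y \<le> infdist a Y + infdist b Y" for a b by (rule infdist_subadd[OF Y])
    show "infdist (c *\<^sub>R a) Y = c * infdist a Y" if "c > 0" for c a by (rule infdist_hom[OF Y that])
    show "subspace (span {x})" by (rule subspace_span)
    show "l (a + b) = l a + l b" if ab: "a \<in> span {x}" "b \<in> span {x}" for a b
    proof -
      obtain s t where "a = s *\<^sub>R x" "b = t *\<^sub>R x" using ab W by auto
      moreover have "l (s *\<^sub>R x + t *\<^sub>R x) = (s + t) * D"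
        using lt[of "s + t"] by (simp add: scaleR_add_left)
      ultimately show ?thesis by (simp add: lt algebra_simps)
    qed
    show "l (c *\<^sub>R a) = c * l a" if ab: "a \<in> span {x}" for c a
    proof -
      obtain s where "a = s *\<^sub>R x" using ab W by auto
      thus ?thesis by (simp add: lt)
    qed
    show "l a \<le> infdist a Y" if ab: "a \<in> span {x}" for a
    proof -
      obtain s where a: "a = s *\<^sub>R x" using ab W by auto
      have D0: "0 \<le> D" unfolding D_def by (rule infdist_nonneg)
      show ?thesis
      proof (cases "s > 0")
        case True thus ?thesis using a lt infdist_hom[OF Y True, of x] D_def by simp
      next
        case False
        hence "s * D \<le> 0" using D0 by (simp add: mult_nonpos_nonneg)
        thus ?thesis using a lt infdist_nonneg[of a Y] by simp
      qed
    qed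
  qed
  then obtain g where g: "linear g" "\<And>a. a \<in> span {x} \<Longrightarrow> g a = l a" "\<And>a. g a \<le> infdist a Y"
    by blast
  have gle: "g z \<le> norm z" for z
  proof -
    have "g z \<le> infdist z Y" by (rule g(3))
    also have "\<dots> \<le> dist z 0" by (rule infdist_le[OF subspace_0[OF Y]])
    finally show ?thesis by simp
  qed
  have "\<bar>g z\<bar> \<le> norm z" for z
    using gle[of z] gle[of "- z"] linear_neg[OF g(1), of z] by simp
  moreover have "g y = 0" if "y \<in> Y" for y
    using g(3)[of y] g(3)[of "- y"] linear_neg[OF g(1), of y] that subspace_neg[OF Y that]
      infdist_zero[of y Y] infdist_zero[of "-y" Y] by simp
  moreover have "d \<le> g x"
    using g(2)[of x] lt[of 1] Dd span_base[of x "{x}"] by simp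
  ultimately show ?thesis using g(1) by blast
qed



lemma ker_span:
  fixes g :: "'i \<Rightarrow> 'b::real_vector \<Rightarrow> real" and h :: "'b \<Rightarrow> real"
  assumes "finite I" "\<And>i. i \<in> I \<Longrightarrow> linear (g i)" "linear h"
    "\<And>z. (\<forall>i\<in>I. g i z = 0) \<Longrightarrow> h z = 0"
  shows "\<exists>c. \<forall>z. h z = (\<Sum>i\<in>I. c i * g i z)"
using assms(1,2,3,4)
proof (induction I arbitrary: h rule: finite_induct)
  case empty
  then show ?case by auto
next
  case (insert j I)
  show ?case
  proof (cases "\<forall>z. (\<forall>i\<in>I. g i z = 0) \<longrightarrow> g j z = 0")
    case True
    have "\<exists>c. \<forall>z. h z = (\<Sum>i\<in>I. c i * g i z)"
      by (rule insert.IH) (use insert.prems True in auto)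
    then obtain c where c: "\<forall>z. h z = (\<Sum>i\<in>I. c i * g i z)" by blast
    have "\<forall>z. h z = (\<Sum>i\<in>insert j I. (c(j := 0)) i * g i z)"
    proof
      fix z
      have "(\<Sum>i\<in>I. (c(j := 0)) i * g i z) = (\<Sum>i\<in>I. c i * g i z)"
        by (rule sum.cong) (use insert.hyps in auto)
      thus "h z = (\<Sum>i\<in>insert j I. (c(j := 0)) i * g i z)"
        using c insert.hyps by simp
    qed
    thus ?thesis by blast
  next
    case False
    then obtain z0 where z0: "\<forall>i\<in>I. g i z0 = 0" "g j z0 \<noteq> 0" by blast
    define a where "a = h z0 / g j z0"
    define h' where "h' z = h z - a * g j z" for z
    have lj: "linear (g j)" using insert.prems by auto
    have lh: "linear h" using insert.prems by auto
    have lh': "linear h'"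
      unfolding h'_def
      by (rule linearI) (simp_all add: linear_add[OF lh] linear_add[OF lj] linear_scale[OF lh]
            linear_scale[OF lj] algebra_simps)
    have "h' z = 0" if zI: "\<forall>i\<in>I. g i z = 0" for z
    proof -
      define w where "w = z - (g j z / g j z0) *\<^sub>R z0"
      have "\<forall>i\<in>insert j I. g i w = 0"
      proof
        fix i assume i: "i \<in> insert j I"
        have li: "linear (g i)" using insert.prems i by auto
        have "g i w = g i z - (g j z / g j z0) * g i z0"
          unfolding w_def by (simp add: linear_diff[OF li] linear_scale[OF li])
        thus "g i w = 0" using i zI z0 by auto
      qed
      hence "h w = 0" using insert.prems by blast
      moreover have "h w = h z - (g j z / g j z0) * h z0"
        unfolding w_def by (simp add: linear_diff[OF lh] linear_scale[OF lh])
      ultimately show ?thesis unfolding h'_def a_def by (simp add: field_simps)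
    qed
    hence "\<exists>c. \<forall>z. h' z = (\<Sum>i\<in>I. c i * g i z)"
      using insert.IH[of h'] insert.prems lh' by auto
    then obtain c where c: "\<forall>z. h' z = (\<Sum>i\<in>I. c i * g i z)" by blast
    have "\<forall>z. h z = (\<Sum>i\<in>insert j I. (c(j := a)) i * g i z)"
    proof
      fix z
      have "(\<Sum>i\<in>I. (c(j := a)) i * g i z) = (\<Sum>i\<in>I. c i * g i z)"
        by (rule sum.cong) (use insert.hyps in auto)
      thus "h z = (\<Sum>i\<in>insert j I. (c(j := a)) i * g i z)"
        using c insert.hyps unfolding h'_def by (simp add: algebra_simps)
    qed
    thus ?thesis by blast
  qed
qed



lemma bl_of_linear:
  fixes g :: "'b::real_normed_vector \<Rightarrow> real"
  assumes "linear g" "\<And>z. \<bar>g z\<bar> \<le> norm z"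
  shows "bounded_linear g"
  by (rule bounded_linear.intro[OF assms(1)])
     (auto simp: bounded_linear_axioms_def intro!: exI[of _ 1] assms(2))

lemma lin_bf: "linear (blinfun_apply f)"
  by (rule bounded_linear.linear[OF blinfun.bounded_linear_right])

lemma lin_bf_left: "linear (\<lambda>f. blinfun_apply f e)"
  by (rule bounded_linear.linear[OF blinfun.bounded_linear_left])

lemma rep_phi:
  fixes \<phi> :: "('a::real_normed_vector \<Rightarrow>\<^sub>L real) \<Rightarrow>\<^sub>L real"
  assumes "finite F" "\<And>z. blinfun_apply G z = (\<Sum>f\<in>F. c f * blinfun_apply f z)"
  shows "\<phi> G = (\<Sum>f\<in>F. c f * \<phi> f)"
proof -
  have "G = (\<Sum>f\<in>F. c f *\<^sub>R f)" by (rule blinfun_eqI) (simp add: assms(2) blinfun.sum_left blinfun.scaleR_left)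
  thus ?thesis by (simp add: blinfun.sum_right blinfun.scaleR_right)
qed

lemma sol_exists:
  fixes \<phi> :: "('a::real_normed_vector \<Rightarrow>\<^sub>L real) \<Rightarrow>\<^sub>L real"
  assumes "finite F" shows "\<exists>x0. \<forall>f\<in>F. blinfun_apply f x0 = \<phi> f"
using assms
proof (induction F rule: finite_induct)
  case empty thus ?case by auto
next
  case (insert h F)
  then obtain x0 where x0: "\<forall>f\<in>F. blinfun_apply f x0 = \<phi> f" by blast
  show ?case
  proof (cases "\<forall>z. (\<forall>f\<in>F. blinfun_apply f z = 0) \<longrightarrow> blinfun_apply h z = 0")
    case True
    obtain c where c: "\<forall>z. blinfun_apply h z = (\<Sum>f\<in>F. c f * blinfun_apply f z)"
      using ker_span[of F "\<lambda>f. blinfun_apply f" "blinfun_apply h"] insert.hyps True lin_bf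
      by blast
    have "\<phi> h = (\<Sum>f\<in>F. c f * \<phi> f)" by (rule rep_phi) (use insert.hyps c in auto)
    also have "\<dots> = (\<Sum>f\<in>F. c f * blinfun_apply f x0)" using x0 by (auto intro!: sum.cong)
    also have "\<dots> = blinfun_apply h x0" using c by simp
    finally show ?thesis using x0 by auto
  next
    case False
    then obtain z0 where z0: "\<forall>f\<in>F. blinfun_apply f z0 = 0" "blinfun_apply h z0 \<noteq> 0" by blast
    define x1 where "x1 = x0 + ((\<phi> h - blinfun_apply h x0) / blinfun_apply h z0) *\<^sub>R z0"
    have "\<forall>f\<in>insert h F. blinfun_apply f x1 = \<phi> f"
      using x0 z0 by (auto simp: x1_def blinfun.add_right blinfun.scaleR_right)
    thus ?thesis by blast
  qed
qed

lemma helly: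
  fixes \<phi> :: "('a::real_normed_vector \<Rightarrow>\<^sub>L real) \<Rightarrow>\<^sub>L real"
  assumes F: "finite F" and r: "norm \<phi> < r"
  shows "\<exists>x. norm x < r \<and> (\<forall>f\<in>F. blinfun_apply f x = \<phi> f)"
proof -
  obtain x0 where x0: "\<forall>f\<in>F. blinfun_apply f x0 = \<phi> f" using sol_exists[OF F] by blast
  define N where "N = {z. \<forall>f\<in>F. blinfun_apply f z = 0}"
  have N: "subspace N" unfolding N_def subspace_def
    by (auto simp: blinfun.add_right blinfun.scaleR_right)
  show ?thesis
  proof (cases "\<exists>n\<in>N. norm (x0 - n) < r")
    case True
    then obtain n where "n \<in> N" "norm (x0 - n) < r" by blast
    thus ?thesis using x0 by (intro exI[of _ "x0 - n"]) (auto simp: N_def blinfun.diff_right)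
  next
    case False
    have r0: "r > 0" using r norm_ge_zero[of \<phi>] by linarith
    have "\<exists>g. linear g \<and> (\<forall>z. \<bar>g z\<bar> \<le> norm z) \<and> (\<forall>y\<in>N. g y = 0) \<and> r \<le> g x0"
      by (rule dist_functional[OF N r0]) (use False in \<open>auto simp: not_less\<close>)
    then obtain g where g: "linear g" "\<And>z. \<bar>g z\<bar> \<le> norm z" "\<And>y. y\<in>N \<Longrightarrow> g y = 0" "r \<le> g x0"
      by blast
    obtain c where c: "\<forall>z. g z = (\<Sum>f\<in>F. c f * blinfun_apply f z)"
      using ker_span[of F "\<lambda>f. blinfun_apply f" g] F g(1) g(3) lin_bf unfolding N_def by blast
    have bl: "bounded_linear g" by (rule bl_of_linear[OF g(1) g(2)])
    define G where "G = Blinfun g"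
    have Gapp: "blinfun_apply G = g" unfolding G_def using bl by (simp add: bounded_linear_Blinfun_apply)
    have nG: "norm G \<le> 1" by (rule norm_blinfun_bound) (use g(2) Gapp in auto)
    have "\<phi> G = (\<Sum>f\<in>F. c f * \<phi> f)" by (rule rep_phi[OF F]) (use c Gapp in auto)
    also have "\<dots> = (\<Sum>f\<in>F. c f * blinfun_apply f x0)" using x0 by (auto intro!: sum.cong)
    also have "\<dots> = g x0" using c by simp
    finally have "r \<le> \<phi> G" using g(4) by simp
    moreover have "\<phi> G \<le> norm \<phi> * norm G" using norm_blinfun[of \<phi> G] by simp
    moreover have "norm \<phi> * norm G \<le> norm \<phi>" using nG by (simp add: mult_left_le)
    ultimately show ?thesis using r by linarith
  qed
qed

lemma norming:
  fixes z :: "'b::real_normed_vector"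
  shows "\<exists>G::'b \<Rightarrow>\<^sub>L real. norm G \<le> 1 \<and> blinfun_apply G z = norm z"
proof (cases "z = 0")
  case True thus ?thesis by (intro exI[of _ 0]) simp
next
  case False
  have "\<exists>g. linear g \<and> (\<forall>w. \<bar>g w\<bar> \<le> norm w) \<and> (\<forall>y\<in>{0}. g y = 0) \<and> norm z \<le> g z"
    by (rule dist_functional[OF subspace_single_0]) (use False in auto)
  then obtain g where g: "linear g" "\<And>w. \<bar>g w\<bar> \<le> norm w" "norm z \<le> g z" by blast
  have bl: "bounded_linear g" by (rule bl_of_linear[OF g(1) g(2)])
  define G where "G = Blinfun g"
  have Gapp: "blinfun_apply G = g" unfolding G_def using bl by (simp add: bounded_linear_Blinfun_apply)
  have nG: "norm G \<le> 1" by (rule norm_blinfun_bound) (use g(2) Gapp in auto)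
  have "g z = norm z" using g(2)[of z] g(3) by simp
  thus ?thesis using nG Gapp by auto
qed

lemma sep_exists:
  fixes \<phi> :: "('a::banach \<Rightarrow>\<^sub>L real) \<Rightarrow>\<^sub>L real"
  assumes nr: "\<forall>x. \<exists>f. \<phi> f \<noteq> blinfun_apply f x"
  shows "\<exists>\<theta>>0. \<forall>x. \<exists>g. \<theta> * norm g < \<bar>\<phi> g - blinfun_apply g x\<bar>"
proof (rule ccontr)
  assume "\<not> ?thesis"
  hence H: "\<forall>\<theta>>0. \<exists>x. \<forall>g. \<bar>\<phi> g - blinfun_apply g x\<bar> \<le> \<theta> * norm g" by (meson not_le)
  have "\<forall>n. \<exists>x. \<forall>g. \<bar>\<phi> g - blinfun_apply g x\<bar> \<le> inverse (real (Suc n)) * norm g"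
    using H by simp
  then obtain xs where xs: "\<And>n g. \<bar>\<phi> g - blinfun_apply g (xs n)\<bar> \<le> inverse (real (Suc n)) * norm g"
    by metis
  have dx: "norm (xs n - xs m) \<le> inverse (real (Suc n)) + inverse (real (Suc m))" for n m
  proof -
    obtain G where G: "norm G \<le> 1" "blinfun_apply G (xs n - xs m) = norm (xs n - xs m)"
      using norming by blast
    have "norm (xs n - xs m) = blinfun_apply G (xs n) - blinfun_apply G (xs m)"
      using G by (simp add: blinfun.diff_right)
    also have "\<dots> \<le> \<bar>\<phi> G - blinfun_apply G (xs n)\<bar> + \<bar>\<phi> G - blinfun_apply G (xs m)\<bar>" by linarith
    also have "\<dots> \<le> inverse (real (Suc n)) * norm G + inverse (real (Suc m)) * norm G"
      using xs[where n=n and g=G] xs[where n=m and g=G] by linarith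
    also have "\<dots> \<le> inverse (real (Suc n)) + inverse (real (Suc m))"
      using G(1) by (intro add_mono) (simp_all add: mult_left_le)
    finally show ?thesis .
  qed
  have "Cauchy xs"
  proof (rule metric_CauchyI)
    fix e :: real assume e: "e > 0"
    obtain M where M: "inverse (real (Suc M)) < e/2"
      using reals_Archimedean[of "e/2"] e by auto
    have "dist (xs m) (xs n) < e" if "m \<ge> M" "n \<ge> M" for m n
    proof -
      have "inverse (real (Suc m)) \<le> inverse (real (Suc M))" using that by (simp add: field_simps)
      moreover have "inverse (real (Suc n)) \<le> inverse (real (Suc M))" using that by (simp add: field_simps)
      ultimately show ?thesis using dx[of m n] M unfolding dist_norm by linarith
    qed
    thus "\<exists>M. \<forall>m\<ge>M. \<forall>n\<ge>M. dist (xs m) (xs n) < e" by blast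
  qed
  then obtain x where x: "xs \<longlonglongrightarrow> x" using Cauchy_convergent convergent_def by blast
  have "\<phi> g = blinfun_apply g x" for g
  proof -
    have "(\<lambda>n. blinfun_apply g (xs n)) \<longlonglongrightarrow> blinfun_apply g x"
      by (rule bounded_linear.tendsto[OF blinfun.bounded_linear_right x])
    hence l1: "(\<lambda>n. \<bar>\<phi> g - blinfun_apply g (xs n)\<bar>) \<longlonglongrightarrow> \<bar>\<phi> g - blinfun_apply g x\<bar>"
      by (intro tendsto_intros) (use x in auto)
    have l2: "(\<lambda>n. inverse (real (Suc n)) * norm g) \<longlonglongrightarrow> 0 * norm g"
      by (intro tendsto_intros LIMSEQ_inverse_real_of_nat)
    have "\<bar>\<phi> g - blinfun_apply g x\<bar> \<le> 0 * norm g"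
      by (rule tendsto_le[OF trivial_limit_sequentially l2 l1]) (use xs in auto)
    thus ?thesis by simp
  qed
  thus False using nr by blast
qed

lemma fsel_exists:
  fixes \<phi> :: "('a::real_normed_vector \<Rightarrow>\<^sub>L real) \<Rightarrow>\<^sub>L real"
  assumes \<theta>: "\<theta> > 0" and sep: "\<forall>x. \<exists>g. \<theta> * norm g < \<bar>\<phi> g - blinfun_apply g x\<bar>"
    and E: "finite E"
  shows "\<exists>f. norm f \<le> 1 \<and> (\<forall>e\<in>E. blinfun_apply f e = 0) \<and> \<theta> < \<phi> f"
proof (rule ccontr)
  assume "\<not> ?thesis"
  hence H: "\<And>f. norm f \<le> 1 \<Longrightarrow> (\<forall>e\<in>E. blinfun_apply f e = 0) \<Longrightarrow> \<phi> f \<le> \<theta>"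
    by (auto simp: not_less)
  define N where "N = {f :: 'a \<Rightarrow>\<^sub>L real. \<forall>e\<in>E. blinfun_apply f e = 0}"
  have N: "subspace N" unfolding N_def subspace_def
    by (auto simp: blinfun.add_left blinfun.scaleR_left)
  have bound: "\<phi> f \<le> \<theta> * norm f" if "f \<in> N" for f
  proof (cases "f = 0")
    case True thus ?thesis by simp
  next
    case False
    have "\<phi> (inverse (norm f) *\<^sub>R f) \<le> \<theta>"
      by (rule H) (use that False in \<open>auto simp: N_def blinfun.scaleR_left\<close>)
    hence "inverse (norm f) * \<phi> f \<le> \<theta>" by (simp add: blinfun.scaleR_right)
    thus ?thesis using False by (simp add: field_simps)
  qed
  have "\<exists>g. linear g \<and> (\<forall>a\<in>N. g a = \<phi> a) \<and> (\<forall>a. g a \<le> \<theta> * norm a)"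
  proof (rule HB_ext[OF _ _ N])
    show "\<theta> * norm (a + b) \<le> \<theta> * norm a + \<theta> * norm b" for a b :: "'a \<Rightarrow>\<^sub>L real"
      using mult_left_mono[OF norm_triangle_ineq[of a b], of \<theta>] \<theta> by (simp add: distrib_left)
    show "\<theta> * norm (c *\<^sub>R a) = c * (\<theta> * norm a)" if "c > 0" for c and a :: "'a \<Rightarrow>\<^sub>L real"
      using that by simp
    show "\<phi> (a + b) = \<phi> a + \<phi> b" for a b by (simp add: blinfun.add_right)
    show "\<phi> (c *\<^sub>R a) = c * \<phi> a" for c a by (simp add: blinfun.scaleR_right)
    show "\<phi> a \<le> \<theta> * norm a" if "a \<in> N" for a by (rule bound[OF that])
  qed
  then obtain \<Lambda> where L: "linear \<Lambda>" "\<And>a. a\<in>N \<Longrightarrow> \<Lambda> a = \<phi> a" "\<And>a. \<Lambda> a \<le> \<theta> * norm a"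
    by blast
  define h where "h f = \<phi> f - \<Lambda> f" for f
  have lh: "linear h" unfolding h_def
    by (rule linearI) (simp_all add: linear_add[OF L(1)] linear_scale[OF L(1)]
          blinfun.add_right blinfun.scaleR_right algebra_simps)
  have "\<exists>c. \<forall>f. h f = (\<Sum>e\<in>E. c e * blinfun_apply f e)"
    by (rule ker_span[OF E lin_bf_left lh]) (simp add: h_def L(2) N_def)
  then obtain c where c: "\<And>f. h f = (\<Sum>e\<in>E. c e * blinfun_apply f e)" by blast
  define e0 where "e0 = (\<Sum>e\<in>E. c e *\<^sub>R e)"
  have fe0: "blinfun_apply f e0 = (\<Sum>e\<in>E. c e * blinfun_apply f e)" for f
    by (simp add: e0_def blinfun.sum_right blinfun.scaleR_right)
  have "\<bar>\<phi> f - blinfun_apply f e0\<bar> \<le> \<theta> * norm f" for f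
  proof -
    have "\<phi> f - blinfun_apply f e0 = \<Lambda> f" using c[of f] fe0[of f] h_def by simp
    moreover have "- \<Lambda> f \<le> \<theta> * norm f" using L(3)[of "- f"] linear_neg[OF L(1), of f] by simp
    ultimately show ?thesis using L(3)[of f] by linarith
  qed
  thus False using sep by (meson not_le)
qed



lemma weak_open:
  fixes f :: "'a::real_normed_vector \<Rightarrow> real"
  shows "bounded_linear f \<Longrightarrow> open U \<Longrightarrow> openin weak_topology (f -` U)"
  unfolding weak_topology_def by (rule topology_generated_by_Basis) blast

lemma weak_topspace: "topspace (weak_topology :: 'a::real_normed_vector topology) = UNIV"
proof -
  have "(\<lambda>_::'a. 0::real) -` UNIV \<in> {f -` U | (f :: 'a \<Rightarrow> real) U. bounded_linear f \<and> open U}"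
    by (intro CollectI exI[of _ "\<lambda>_::'a. 0::real"] exI[of _ UNIV]) (simp add: bounded_linear_zero)
  hence "UNIV \<subseteq> \<Union>{f -` U | (f :: 'a \<Rightarrow> real) U. bounded_linear f \<and> open U}" by auto
  thus ?thesis unfolding weak_topology_def by auto
qed

lemma weak_closed_ge:
  fixes f :: "'a::real_normed_vector \<Rightarrow> real"
  assumes "bounded_linear f" shows "closedin weak_topology {z. c \<le> f z}"
proof -
  have "topspace weak_topology - {z. c \<le> f z} = f -` {..<c}" using weak_topspace by auto
  moreover have "openin weak_topology (f -` {..<c})" by (rule weak_open[OF assms]) simp
  ultimately show ?thesis unfolding closedin_def using weak_topspace by auto
qed

lemma span_range_finite:
  fixes xx :: "nat \<Rightarrow> 'a::real_vector"
  assumes "y \<in> span (range xx)" shows "\<exists>m. y \<in> span (xx ` {..<m})"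
proof -
  define V where "V = {y. \<exists>m. y \<in> span (xx ` {..<m})}"
  have "subspace V" unfolding subspace_def V_def
  proof (intro conjI allI ballI impI)
    show "0 \<in> {y. \<exists>m. y \<in> span (xx ` {..<m})}" using span_0 by blast
  next
    fix a b assume "a \<in> {y. \<exists>m. y \<in> span (xx ` {..<m})}" "b \<in> {y. \<exists>m. y \<in> span (xx ` {..<m})}"
    then obtain m m' where "a \<in> span (xx ` {..<m})" "b \<in> span (xx ` {..<m'})" by blast
    moreover have "span (xx ` {..<m}) \<subseteq> span (xx ` {..<max m m'})" by (intro span_mono image_mono) (auto simp: less_max_iff_disj)
    moreover have "span (xx ` {..<m'}) \<subseteq> span (xx ` {..<max m m'})" by (intro span_mono image_mono) (auto simp: less_max_iff_disj)
    ultimately have "a \<in> span (xx ` {..<max m m'})" "b \<in> span (xx ` {..<max m m'})" by blast+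
    thus "a + b \<in> {y. \<exists>m. y \<in> span (xx ` {..<m})}" using span_add by blast
  next
    fix c a assume "a \<in> {y. \<exists>m. y \<in> span (xx ` {..<m})}"
    thus "c *\<^sub>R a \<in> {y. \<exists>m. y \<in> span (xx ` {..<m})}" using span_scale by blast
  qed
  moreover have "range xx \<subseteq> V"
  proof
    fix z assume "z \<in> range xx"
    then obtain k where "z = xx k" by blast
    hence "z \<in> span (xx ` {..<Suc k})" by (intro span_base) auto
    thus "z \<in> V" unfolding V_def by blast
  qed
  ultimately have "span (range xx) \<subseteq> V" using span_minimal by blast
  thus ?thesis using assms V_def by blast
qed

lemma james_not_compact:
  fixes xx :: "nat \<Rightarrow> 'a::real_normed_vector" and ff :: "nat \<Rightarrow> 'a \<Rightarrow>\<^sub>L real"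
  assumes \<theta>: "\<theta> > 0"
    and a1: "\<And>i k. k < i \<Longrightarrow> blinfun_apply (ff i) (xx k) = 0"
    and a2: "\<And>i k. i \<le> k \<Longrightarrow> \<theta> < blinfun_apply (ff i) (xx k)"
    and a3: "\<And>i. norm (ff i) \<le> 1"
    and sub: "range xx \<subseteq> S"
  shows "\<not> compactin weak_topology (weak_topology closure_of S)"
proof
  assume comp: "compactin weak_topology (weak_topology closure_of S)"
  define K where "K = weak_topology closure_of S"
  define T where "T m = weak_topology closure_of (xx ` {m..})" for m
  have SK: "S \<subseteq> K" unfolding K_def by (rule closure_of_subset) (simp add: weak_topspace)
  have xT: "xx k \<in> T m" if "m \<le> k" for m k
    unfolding T_def by (rule subsetD[OF closure_of_subset]) (use that weak_topspace in auto)
  from comp have "K \<subseteq> topspace weak_topology \<and>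
    (\<forall>\<U>. (\<forall>C\<in>\<U>. closedin weak_topology C) \<and> (\<forall>\<F>. finite \<F> \<and> \<F> \<subseteq> \<U> \<longrightarrow> K \<inter> \<Inter>\<F> \<noteq> {}) \<longrightarrow> K \<inter> \<Inter>\<U> \<noteq> {})"
    unfolding compactin_fip K_def .
  hence fip: "\<And>\<U>. (\<forall>C\<in>\<U>. closedin weak_topology C) \<Longrightarrow> (\<forall>\<F>. finite \<F> \<and> \<F> \<subseteq> \<U> \<longrightarrow> K \<inter> \<Inter>\<F> \<noteq> {}) \<Longrightarrow> K \<inter> \<Inter>\<U> \<noteq> {}"
    by blast
  have "K \<inter> \<Inter>(range T) \<noteq> {}"
  proof (rule fip)
    show "\<forall>C\<in>range T. closedin weak_topology C" unfolding T_def by auto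
    show "\<forall>\<F>. finite \<F> \<and> \<F> \<subseteq> range T \<longrightarrow> K \<inter> \<Inter>\<F> \<noteq> {}"
    proof (intro allI impI, elim conjE)
      fix \<F> assume fin: "finite \<F>" "\<F> \<subseteq> range T"
      obtain Ms where Ms: "finite Ms" "\<F> = T ` Ms" using finite_subset_image[OF fin(1,2)] by blast
      define k where "k = (if Ms = {} then 0 else Max Ms)"
      have "xx k \<in> K" using sub SK by auto
      moreover have "xx k \<in> T m" if "m \<in> Ms" for m
        by (rule xT) (use that Ms k_def in auto)
      ultimately show "K \<inter> \<Inter>\<F> \<noteq> {}" using Ms by blast
    qed
  qed
  then obtain x where x: "\<And>m. x \<in> T m" by blast
  have fx: "\<theta> \<le> blinfun_apply (ff i) x" for i
  proof -
    have "T i \<subseteq> {z. \<theta> \<le> blinfun_apply (ff i) z}"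
      unfolding T_def
      by (rule closure_of_minimal) (use a2 less_imp_le in \<open>auto intro!: weak_closed_ge blinfun.bounded_linear_right\<close>)
    thus ?thesis using x[of i] by blast
  qed
  define Y where "Y = span (range xx)"
  have "\<exists>y\<in>Y. norm (x - y) < \<theta>"
  proof (rule ccontr)
    assume "\<not> ?thesis"
    hence "\<And>y. y \<in> Y \<Longrightarrow> \<theta> \<le> norm (x - y)" by (auto simp: not_less)
    hence "\<exists>g. linear g \<and> (\<forall>z. \<bar>g z\<bar> \<le> norm z) \<and> (\<forall>y\<in>Y. g y = 0) \<and> \<theta> \<le> g x"
      using dist_functional[of Y \<theta> x] \<theta> subspace_span Y_def by blast
    then obtain g where g: "linear g" "\<And>z. \<bar>g z\<bar> \<le> norm z" "\<And>y. y\<in>Y \<Longrightarrow> g y = 0" "\<theta> \<le> g x"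
      by blast
    have bl: "bounded_linear g" by (rule bl_of_linear[OF g(1) g(2)])
    have op: "openin weak_topology (g -` {\<theta>/2<..})" by (rule weak_open[OF bl]) simp
    have "x \<in> g -` {\<theta>/2<..}" using g(4) \<theta> by simp
    moreover have "x \<in> weak_topology closure_of (xx ` {0..})" using x[of 0] T_def by simp
    ultimately obtain y where "y \<in> xx ` {0..}" "y \<in> g -` {\<theta>/2<..}"
      using op unfolding in_closure_of by meson
    moreover have "y \<in> Y" using \<open>y \<in> xx ` {0..}\<close> Y_def by (auto intro: span_base)
    ultimately show False using g(3) \<theta> by auto
  qed
  then obtain y where y: "y \<in> Y" "norm (x - y) < \<theta>" by blast
  obtain m where m: "y \<in> span (xx ` {..<m})" using span_range_finite y(1) Y_def by blast
  have sub0: "subspace {z. blinfun_apply (ff m) z = 0}"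
    unfolding subspace_def by (auto simp: blinfun.add_right blinfun.scaleR_right)
  have "blinfun_apply (ff m) y = 0" by (rule span_induct[OF m sub0]) (use a1 in auto)
  hence "blinfun_apply (ff m) x = blinfun_apply (ff m) (x - y)" by (simp add: blinfun.diff_right)
  also have "\<dots> \<le> norm (ff m) * norm (x - y)" using norm_blinfun[of "ff m" "x - y"] by simp
  also have "\<dots> \<le> norm (x - y)" using a3[of m] by (simp add: mult_left_le_one_le)
  finally show False using fx[of m] y(2) by linarith
qed



lemma countable_iff_le_nat: "countable A \<longleftrightarrow> (card_of A, card_of (UNIV::nat set)) \<in> ordLeq"
  unfolding countable_def card_of_ordLeq[symmetric] by auto

lemma countable_ordLeq: "(card_of A, card_of B) \<in> ordLeq \<Longrightarrow> countable B \<Longrightarrow> countable A"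
  unfolding countable_iff_le_nat by (rule ordLeq_transitive)

lemma countable_ordIso: "(card_of A, card_of B) \<in> ordIso \<Longrightarrow> countable A \<longleftrightarrow> countable B"
proof -
  assume "(card_of A, card_of B) \<in> ordIso"
  hence "(card_of A, card_of B) \<in> ordLeq" "(card_of B, card_of A) \<in> ordLeq"
    unfolding ordIso_iff_ordLeq by auto
  thus ?thesis using countable_ordLeq by metis
qed

lemma card_Un_countable:
  assumes A: "\<not> countable A" and B: "countable B"
  shows "(card_of (A \<union> B), card_of A) \<in> ordIso"
proof -
  have inf: "\<not> finite A" using A by (auto dest: countable_finite)
  have "(card_of B, card_of A) \<in> ordLeq"
  proof -
    have "(card_of B, card_of (UNIV::nat set)) \<in> ordLeq" using B countable_iff_le_nat by blast
    moreover have "(card_of (UNIV::nat set), card_of A) \<in> ordLeq" using inf infinite_iff_card_of_nat by blast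
    ultimately show ?thesis by (rule ordLeq_transitive)
  qed
  moreover have "(card_of A, card_of A) \<in> ordLeq" by (rule ordLeq_refl[OF card_of_Card_order])
  ultimately have "(card_of (A \<union> B), card_of A) \<in> ordLeq"
    using card_of_Un_ordLeq_infinite_Field[of "card_of A" A B] inf
    by (simp add: Field_card_of card_of_Card_order card_of_card_order_on)
  moreover have "(card_of A, card_of (A \<union> B)) \<in> ordLeq" by (rule card_of_mono1) blast
  ultimately show ?thesis unfolding ordIso_iff_ordLeq by blast
qed

lemma big_part:
  assumes A: "\<not> countable A" and B: "countable B" and L: "L \<subseteq> A \<union> B"
    and iso: "(card_of L, card_of (A \<union> B)) \<in> ordIso"
  shows "(card_of (L \<inter> A), card_of A) \<in> ordIso"
proof -
  have AB: "(card_of (A \<union> B), card_of A) \<in> ordIso" by (rule card_Un_countable[OF A B])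
  have LA: "(card_of L, card_of A) \<in> ordIso" using ordIso_transitive[OF iso AB] .
  hence Lu: "\<not> countable L" using countable_ordIso A by blast
  have LB: "countable (L \<inter> B)" using B by (rule countable_subset[rotated]) blast
  have "\<not> countable (L \<inter> A)"
  proof
    assume "countable (L \<inter> A)"
    hence "countable ((L \<inter> A) \<union> (L \<inter> B))" using LB by simp
    moreover have "(L \<inter> A) \<union> (L \<inter> B) = L" using L by blast
    ultimately show False using Lu by simp
  qed
  hence "(card_of ((L \<inter> A) \<union> (L \<inter> B)), card_of (L \<inter> A)) \<in> ordIso"
    by (rule card_Un_countable[OF _ LB])
  moreover have "(L \<inter> A) \<union> (L \<inter> B) = L" using L by blast
  ultimately have h: "(card_of L, card_of (L \<inter> A)) \<in> ordIso" by simp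
  show ?thesis by (rule ordIso_transitive[OF ordIso_symmetric[OF h] LA])
qed



fun jL :: "('a set \<Rightarrow> 'b) \<Rightarrow> ('b set \<Rightarrow> 'a) \<Rightarrow> nat \<Rightarrow> 'a list" where
  "jL Fs Xs 0 = []"
| "jL Fs Xs (Suc n) = jL Fs Xs n @ [Xs ((\<lambda>i. Fs (set (take i (jL Fs Xs n)))) ` {..n})]"

definition jx :: "('a set \<Rightarrow> 'b) \<Rightarrow> ('b set \<Rightarrow> 'a) \<Rightarrow> nat \<Rightarrow> 'a" where
  "jx Fs Xs n = jL Fs Xs (Suc n) ! n"

lemma jL_len: "length (jL Fs Xs n) = n" by (induction n) auto

lemma jL_map: "jL Fs Xs n = map (jx Fs Xs) [0..<n]"
proof (induction n)
  case 0 show ?case by simp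
next
  case (Suc n)
  have "jx Fs Xs n = Xs ((\<lambda>i. Fs (set (take i (jL Fs Xs n)))) ` {..n})"
    unfolding jx_def using jL_len[of Fs Xs n] by (simp add: nth_append)
  thus ?case using Suc by simp
qed

lemma jx_eq: "jx Fs Xs n = Xs ((\<lambda>i. Fs (jx Fs Xs ` {..<i})) ` {..n})"
proof -
  have "jx Fs Xs n = Xs ((\<lambda>i. Fs (set (take i (jL Fs Xs n)))) ` {..n})"
    unfolding jx_def using jL_len[of Fs Xs n] by (simp add: nth_append)
  moreover have "set (take i (jL Fs Xs n)) = jx Fs Xs ` {..<i}" if "i \<le> n" for i
  proof -
    have "take i (jL Fs Xs n) = map (jx Fs Xs) [0..<i]"
      using that by (simp add: jL_map take_map)
    thus ?thesis by (simp add: atLeast0LessThan)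
  qed
  ultimately show ?thesis
    by (metis (no_types, lifting) atMost_iff image_cong)
qed

theorem proposition4p4:
  assumes nonsep: "\<not> separable_space (euclidean :: 'a::banach topology)"
    and nonrefl: "\<not> reflexive_space TYPE('a)"
    and oc: "\<exists>S :: 'a set. overcomplete S"
  shows "\<exists>S :: 'a set. overcomplete S \<and> bounded S \<and> \<not> relatively_weakly_compact S"
proof -
  obtain S :: "'a set" where ocS: "overcomplete S" using oc by blast
  have ceS: "card_eq_density S"
    and odS: "\<And>L. L \<subseteq> S \<Longrightarrow> (card_of L, card_of S) \<in> ordIso \<Longrightarrow> linearly_dense L"
    using ocS unfolding overcomplete_def by auto
  obtain D :: "'a set" where D: "dense_set D" "(card_of S, card_of D) \<in> ordIso"
    using ceS unfolding card_eq_density_def by blast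
  have Dle: "\<And>D :: 'a set. dense_set D \<Longrightarrow> (card_of S, card_of D) \<in> ordLeq"
    using ceS unfolding card_eq_density_def by blast
  have Sunc: "\<not> countable S"
  proof
    assume "countable S"
    hence "countable D" using countable_ordIso D(2) by blast
    hence "separable_space (euclidean :: 'a topology)"
      using D(1) unfolding separable_space_def dense_set_def by (auto simp: euclidean_closure_of)
    thus False using nonsep by blast
  qed
  obtain \<phi> :: "('a \<Rightarrow>\<^sub>L real) \<Rightarrow>\<^sub>L real" where nr: "\<forall>x. \<exists>f. \<phi> f \<noteq> blinfun_apply f x"
    using nonrefl unfolding reflexive_space_def by blast
  obtain \<theta> where \<theta>: "\<theta> > 0" and sep: "\<forall>x. \<exists>g. \<theta> * norm g < \<bar>\<phi> g - blinfun_apply g x\<bar>"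
    using sep_exists[OF nr] by blast
  define r where "r = norm \<phi> + 1"
  define Fs where "Fs E = (SOME f. norm f \<le> 1 \<and> (\<forall>e\<in>E. blinfun_apply f e = 0) \<and> \<theta> < \<phi> f)"
    for E :: "'a set"
  define Xs where "Xs F = (SOME x. norm x < r \<and> (\<forall>f\<in>F. blinfun_apply f x = \<phi> f))"
    for F :: "('a \<Rightarrow>\<^sub>L real) set"
  have FsP: "norm (Fs E) \<le> 1 \<and> (\<forall>e\<in>E. blinfun_apply (Fs E) e = 0) \<and> \<theta> < \<phi> (Fs E)"
    if "finite E" for E
    unfolding Fs_def by (rule someI_ex) (rule fsel_exists[OF \<theta> sep that])
  have XsP: "norm (Xs F) < r \<and> (\<forall>f\<in>F. blinfun_apply f (Xs F) = \<phi> f)" if "finite F" for F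
    unfolding Xs_def by (rule someI_ex) (rule helly[OF that], simp add: r_def)
  define xx where "xx = jx Fs Xs"
  define ff where "ff i = Fs (xx ` {..<i})" for i
  have xxeq: "xx n = Xs (ff ` {..n})" for n unfolding xx_def ff_def by (rule jx_eq)
  have ffP1: "norm (ff i) \<le> 1" and ffP2: "\<And>e. e \<in> xx ` {..<i} \<Longrightarrow> blinfun_apply (ff i) e = 0"
    and ffP3: "\<theta> < \<phi> (ff i)" for i
    using FsP[of "xx ` {..<i}"] unfolding ff_def by auto
  have xxP1: "norm (xx n) < r" and xxP2: "\<And>i. i \<le> n \<Longrightarrow> blinfun_apply (ff i) (xx n) = \<phi> (ff i)" for n
    using XsP[of "ff ` {..n}"] unfolding xxeq by auto
  define g where "g s = inverse (1 + norm s) *\<^sub>R s" for s :: 'a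
  have ng: "norm (g s) = norm s / (1 + norm s)" for s
    unfolding g_def by (simp add: divide_inverse abs_of_nonneg add_nonneg_nonneg mult.commute)
  have ginj: "inj g"
  proof (rule injI)
    fix s t assume eq: "g s = g t"
    have e1: "norm s / (1 + norm s) = norm t / (1 + norm t)" using ng eq by metis
    have p: "1 + norm s > 0" "1 + norm t > 0" by (simp_all add: add_pos_nonneg)
    have "norm s * (1 + norm t) = norm t * (1 + norm s)"
      using e1 p by (simp add: field_simps)
    hence "norm s = norm t" by (simp add: algebra_simps)
    thus "s = t" using eq unfolding g_def
      by (metis inverse_nonzero_iff_nonzero add_pos_nonneg zero_less_one norm_ge_zero
            less_irrefl scaleR_cancel_left)
  qed
  define S' where "S' = g ` S \<union> range xx"
  have nc: "\<not> relatively_weakly_compact S'"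
    unfolding relatively_weakly_compact_def
  proof (rule james_not_compact[OF \<theta>, of ff xx])
    show "blinfun_apply (ff i) (xx k) = 0" if "k < i" for i k using ffP2[of "xx k" i] that by auto
    show "\<theta> < blinfun_apply (ff i) (xx k)" if "i \<le> k" for i k using xxP2[OF that] ffP3[of i] by simp
    show "norm (ff i) \<le> 1" for i by (rule ffP1)
    show "range xx \<subseteq> S'" unfolding S'_def by blast
  qed
  have bd: "bounded S'"
    unfolding bounded_iff
  proof (intro exI ballI)
    fix x assume "x \<in> S'"
    then consider s where "x = g s" | n where "x = xx n" unfolding S'_def by blast
    thus "norm x \<le> r + 1"
    proof cases
      case 1
      have "norm (g s) \<le> 1" unfolding ng by (simp add: add_pos_nonneg)
      moreover have "0 \<le> norm \<phi>" by simp
      moreover have "norm x \<le> 1" using 1 \<open>norm (g s) \<le> 1\<close> by simp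
      ultimately show ?thesis using r_def by linarith
    next
      case 2 thus ?thesis using xxP1[of n] by simp
    qed
  qed
  have gS: "(card_of (g ` S), card_of S) \<in> ordIso"
    by (rule ordIso_symmetric, rule card_of_ordIsoI[of g], rule inj_on_imp_bij_betw)
       (use ginj in \<open>auto simp: inj_on_def inj_def\<close>)
  have gSu: "\<not> countable (g ` S)" using countable_ordIso[OF gS] Sunc by blast
  have cnt: "countable (range xx)" by simp
  have S'iso: "(card_of S', card_of S) \<in> ordIso"
    unfolding S'_def by (rule ordIso_transitive[OF card_Un_countable[OF gSu cnt] gS])
  have ce': "card_eq_density S'"
    unfolding card_eq_density_def
  proof (intro conjI allI impI)
    show "\<exists>D::'a set. dense_set D \<and> (card_of S', card_of D) \<in> ordIso"
      by (intro exI[of _ D] conjI D(1) ordIso_transitive[OF S'iso D(2)])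
    show "(card_of S', card_of D') \<in> ordLeq" if "dense_set D'" for D' :: "'a set"
      by (rule ordIso_ordLeq_trans[OF S'iso Dle[OF that]])
  qed
  have "linearly_dense L" if L: "L \<subseteq> S'" and Liso: "(card_of L, card_of S') \<in> ordIso" for L
  proof -
    have LA: "(card_of (L \<inter> g ` S), card_of (g ` S)) \<in> ordIso"
      by (rule big_part[OF gSu cnt]) (use L Liso S'_def in auto)
    define L0 where "L0 = S \<inter> g -` L"
    have "bij_betw g L0 (L \<inter> g ` S)"
      unfolding bij_betw_def L0_def using ginj by (auto simp: inj_on_def inj_def)
    hence "(card_of L0, card_of (L \<inter> g ` S)) \<in> ordIso" by (rule card_of_ordIsoI)
    hence "(card_of L0, card_of S) \<in> ordIso"
      using ordIso_transitive[OF ordIso_transitive[OF _ LA] gS] by blast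
    hence ld: "linearly_dense L0" by (intro odS) (auto simp: L0_def)
    have "L0 \<subseteq> span L"
    proof
      fix s assume "s \<in> L0"
      hence "g s \<in> L" unfolding L0_def by auto
      hence "(1 + norm s) *\<^sub>R g s \<in> span L" by (intro span_scale span_base)
      moreover have "(1 + norm s) *\<^sub>R g s = s"
      proof -
        have "1 + norm s \<noteq> 0" using norm_ge_zero[of s] by linarith
        thus ?thesis unfolding g_def by simp
      qed
      ultimately show "s \<in> span L" by simp
    qed
    hence "span L0 \<subseteq> span L" using span_minimal subspace_span by blast
    hence "closure (span L0) \<subseteq> closure (span L)" by (rule closure_mono)
    thus ?thesis using ld unfolding linearly_dense_def by auto
  qed
  hence "overcomplete S'" unfolding overcomplete_def using ce' by blast
  thus ?thesis using bd nc by blast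
qed

end
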